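(* Let $\mathcal G\subseteq\mathcal F$ be a sub-$\sigma$-algebra and let $Z\in L_p(\Omega,\mathcal F,P)$ be such that the conditional distributionally robust functional $\mathcal R_{|\mathcal G}(Z)$ belongs to $L_p(\Omega,\mathcal F,P)$. Then $$\mathcal R(Z)\le \mathcal R\big(\mathcal R_{|\mathcal G}(Z)\big).$$
   Context: Let $(\Omega,\mathcal F,P)$ be a probability space, $p\in[1,\infty)$, $1/p+1/q=1$, and $\mathcal Z=L_p(\Omega,\mathcal F,P)$. Let $\mathfrak M$ be a nonempty set of probability measures $Q$ on $(\Omega,\mathcal F)$ with $Q\ll P$ and $dQ/dP\in L_q(\Omega,\mathcal F,P)$, and define $\mathcal R(Z)=\sup_{Q\in\mathfrak M}\mathbb E_Q[Z]$ for $Z\in\mathcal Z$ (assumed finite). Relations $X\preceq Y$ between random variables mean $X\le Y$ $P$-almost surely; essential suprema/infima are taken with respect to $P$. For a probability measure $Q$ and sub-$\sigma$-algebra $\mathcal G$, $\operatorname{ess\,inf}\mathbb E_{Q|\mathcal G}[Z]$ denotes the essential infimum (w.r.t. $P$) of the set of all versions of the conditional expectation of $Z$ given $\mathcal G$ under $Q$ (i.e., all $\mathcal G$-measurable $Y$ with $\int_B Y\,dQ=\int_B Z\,dQ$ for all $B\in\mathcal G$); it equals $-\infty$ on sets $A\in\mathcal G$ with $Q(A)=0<P(A)$. The conditional distributionally robust functional $\mathcal R_{|\mathcal G}(Z)$ is the $\mathcal G$-measurable extended-real function (unique up to $P$-null sets) such that (i) $\operatorname{ess\,inf}\mathbb E_{Q|\mathcal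 G}[Z]\preceq \mathcal R_{|\mathcal G}(Z)$ for every $Q\in\mathfrak M$, and (ii) whenever $Y$ is $\mathcal G$-measurable with $\operatorname{ess\,inf}\mathbb E_{Q|\mathcal G}[Z]\preceq Y$ for all $Q\in\mathfrak M$, then $\mathcal R_{|\mathcal G}(Z)\preceq Y$. That is, $\mathcal R_{|\mathcal G}(Z)=\operatorname{ess\,sup}_{Q\in\mathfrak M}\mathbb E_{Q|\mathcal G}[Z]$. *)

theory Defs
  imports "HOL-Probability.Probability"
begin

definition memLp :: "'a measure \<Rightarrow> real \<Rightarrow> ('a \<Rightarrow> real) \<Rightarrow> bool" where
  "memLp M p f \<longleftrightarrow> f \<in> borel_measurable M \<and> integrable M (\<lambda>x. \<bar>f x\<bar> powr p)"

text \<open>Membership in the dual space L_q(M), 1/p + 1/q = 1 (q = \<infinity> when p = 1).\<close>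
definition memLq_dual :: "'a measure \<Rightarrow> real \<Rightarrow> ('a \<Rightarrow> real) \<Rightarrow> bool" where
  "memLq_dual M p f \<longleftrightarrow> f \<in> borel_measurable M \<and>
     (if p = 1 then (\<exists>C. AE x in M. \<bar>f x\<bar> \<le> C)
      else integrable M (\<lambda>x. \<bar>f x\<bar> powr (p / (p - 1))))"

definition admissible_ambiguity :: "'a measure \<Rightarrow> real \<Rightarrow> 'a measure set \<Rightarrow> bool" where
  "admissible_ambiguity M p \<MM> \<longleftrightarrow> \<MM> \<noteq> {} \<and>
     (\<forall>Q\<in>\<MM>. prob_space Q \<and> sets Q = sets M \<and> absolutely_continuous M Q \<and>
              memLq_dual M p (\<lambda>x. enn2real (RN_deriv M Q x)))"

definition DR :: "'a measure set \<Rightarrow> ('a \<Rightarrow> real) \<Rightarrow> ereal" where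
  "DR \<MM> Z = (SUP Q\<in>\<MM>. ereal (integral\<^sup>L Q Z))"

definition cond_exp_versions :: "'a measure \<Rightarrow> 'a measure \<Rightarrow> ('a \<Rightarrow> real) \<Rightarrow> ('a \<Rightarrow> real) set" where
  "cond_exp_versions Q G Z = {Y. Y \<in> borel_measurable G \<and> integrable Q Y \<and>
      (\<forall>B\<in>sets G. set_lebesgue_integral Q B Y = set_lebesgue_integral Q B Z)}"

definition is_ess_inf :: "'a measure \<Rightarrow> 'a measure \<Rightarrow> ('a \<Rightarrow> real) set \<Rightarrow> ('a \<Rightarrow> ereal) \<Rightarrow> bool" where
  "is_ess_inf M G S h \<longleftrightarrow> h \<in> borel_measurable G \<and>
     (\<forall>Y\<in>S. AE x in M. h x \<le> ereal (Y x)) \<and>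
     (\<forall>h'\<in>borel_measurable G. (\<forall>Y\<in>S. AE x in M. h' x \<le> ereal (Y x)) \<longrightarrow> (AE x in M. h' x \<le> h x))"

text \<open>RG is (a version of) the conditional distributionally robust functional R_{|G}(Z),
  i.e. the essential supremum over Q of ess inf E_{Q|G}[Z].\<close>
definition is_cond_DR :: "'a measure \<Rightarrow> 'a measure \<Rightarrow> 'a measure set \<Rightarrow> ('a \<Rightarrow> real) \<Rightarrow> ('a \<Rightarrow> ereal) \<Rightarrow> bool" where
  "is_cond_DR M G \<MM> Z RG \<longleftrightarrow> RG \<in> borel_measurable G \<and>
     (\<forall>Q\<in>\<MM>. \<forall>h. is_ess_inf M G (cond_exp_versions Q G Z) h \<longrightarrow> (AE x in M. h x \<le> RG x)) \<and>
     (\<forall>Y\<in>borel_measurable G.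
        (\<forall>Q\<in>\<MM>. \<forall>h. is_ess_inf M G (cond_exp_versions Q G Z) h \<longrightarrow> (AE x in M. h x \<le> Y x))
        \<longrightarrow> (AE x in M. RG x \<le> Y x))"

end

theory Submission
  imports Defs
begin

lemma young_simple:
  fixes a b p :: real
  assumes "p > 1" "a \<ge> 0" "b \<ge> 0"
  shows "a * b \<le> a powr (p/(p-1)) + b powr p"
proof (cases "a \<le> b powr (p-1)")
  case True
  have "a * b \<le> b powr (p-1) * b" using True assms by (simp add: mult_right_mono)
  also have "\<dots> = b powr p"
  proof (cases "b = 0")
    case False
    have "b powr (p-1) * b powr 1 = b powr (p-1+1)" by (rule powr_add[symmetric])
    then show ?thesis using assms False by simp
  qed (use assms in auto)
  finally show ?thesis using assms by (smt (verit) powr_ge_zero)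
next
  case False
  then have a0: "a > 0" using assms by (smt (verit) powr_ge_zero)
  have "b = (b powr (p-1)) powr (1/(p-1))" using assms by (simp add: powr_powr)
  also have "\<dots> \<le> a powr (1/(p-1))" using False assms by (intro powr_mono2) auto
  finally have "a * b \<le> a * a powr (1/(p-1))" using a0 by simp
  also have "\<dots> = a powr (1 + 1/(p-1))" using a0 by (simp add: powr_add)
  also have "1 + 1/(p-1) = p/(p-1)" using assms by (simp add: field_simps)
  finally show ?thesis using assms by (smt (verit) powr_ge_zero)
qed

lemma integrable_Q:
  assumes M: "prob_space M" and p: "p \<ge> 1" and adm: "admissible_ambiguity M p \<MM>"
    and Q: "Q \<in> \<MM>" and f: "memLp M p f"
  shows "integrable Q f"
proof -
  interpret prob_space M by fact
  have PQ: "prob_space Q" "sets Q = sets M" "absolutely_continuous M Q"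
      and d: "memLq_dual M p (\<lambda>x. enn2real (RN_deriv M Q x))"
    using adm Q unfolding admissible_ambiguity_def by auto
  have fm[measurable]: "f \<in> borel_measurable M" and fi: "integrable M (\<lambda>x. \<bar>f x\<bar> powr p)"
    using f unfolding memLp_def by auto
  define d where "d = (\<lambda>x. enn2real (RN_deriv M Q x))"
  have dm[measurable]: "d \<in> borel_measurable M" unfolding d_def by simp
  have sf: "sigma_finite_measure Q" using PQ(1) by (simp add: prob_space_imp_sigma_finite)
  have "integrable M (\<lambda>x. d x * f x)"
  proof (cases "p = 1")
    case True
    then obtain C where C: "AE x in M. \<bar>d x\<bar> \<le> C" using d unfolding memLq_dual_def d_def by auto
    have fi1: "integrable M f" using fi True by (simp add: integrable_abs_iff)
    show ?thesis
    proof (rule Bochner_Integration.integrable_bound[of _ "\<lambda>x. C * \<bar>f x\<bar>"])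
      show "integrable M (\<lambda>x. C * \<bar>f x\<bar>)" using fi1 by auto
      show "AE x in M. norm (d x * f x) \<le> norm (C * \<bar>f x\<bar>)"
        using C by eventually_elim (auto simp: abs_mult intro: mult_right_mono order_trans[OF _ abs_ge_self])
    qed simp
  next
    case False
    then have p1: "p > 1" using p by simp
    have di: "integrable M (\<lambda>x. \<bar>d x\<bar> powr (p/(p-1)))" using d False unfolding memLq_dual_def d_def by auto
    show ?thesis
    proof (rule Bochner_Integration.integrable_bound[of _ "\<lambda>x. \<bar>d x\<bar> powr (p/(p-1)) + \<bar>f x\<bar> powr p"])
      show "integrable M (\<lambda>x. \<bar>d x\<bar> powr (p/(p-1)) + \<bar>f x\<bar> powr p)" using di fi by auto
      show "AE x in M. norm (d x * f x) \<le> norm (\<bar>d x\<bar> powr (p/(p-1)) + \<bar>f x\<bar> powr p)"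
        using young_simple[OF p1] by (auto simp: abs_mult)
    qed simp
  qed
  then show ?thesis
    using RN_deriv_integrable[OF sf PQ(3) PQ(2)] fm unfolding d_def by simp
qed


lemma maximal_null:
  assumes M: "prob_space M" and sub: "subalgebra M G" and sQ: "sets Q = sets M"
  shows "\<exists>N\<in>sets G. emeasure Q N = 0 \<and> (\<forall>B\<in>sets G. emeasure Q B = 0 \<longrightarrow> measure M (B - N) = 0)"
proof -
  interpret prob_space M by fact
  have GM: "\<And>B. B \<in> sets G \<Longrightarrow> B \<in> sets M" using sub unfolding subalgebra_def by auto
  define S where "S = {measure M B | B. B \<in> sets G \<and> emeasure Q B = 0}"
  have Sne: "S \<noteq> {}" unfolding S_def by (auto intro!: exI[of _ "{}"])
  have Sbdd: "bdd_above S" unfolding S_def by (auto intro!: bdd_aboveI[of _ 1])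
  define s where "s = Sup S"
  have "\<forall>n::nat. \<exists>B. B \<in> sets G \<and> emeasure Q B = 0 \<and> s - 1 / real (Suc n) < measure M B"
  proof
    fix n :: nat
    have "s - 1 / real (Suc n) < Sup S" unfolding s_def by simp
    then obtain x where "x \<in> S" "s - 1 / real (Suc n) < x" using less_cSup_iff[OF Sne Sbdd] by blast
    then show "\<exists>B. B \<in> sets G \<and> emeasure Q B = 0 \<and> s - 1 / real (Suc n) < measure M B"
      unfolding S_def by auto
  qed
  then obtain Bs where Bs: "\<And>n. Bs n \<in> sets G" "\<And>n. emeasure Q (Bs n) = 0"
      "\<And>n. s - 1 / real (Suc n) < measure M (Bs n)" by metis
  define N where "N = (\<Union>n. Bs n)"
  have NG: "N \<in> sets G" unfolding N_def using Bs(1) by auto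
  have QN: "emeasure Q N = 0" unfolding N_def
    by (rule emeasure_UN_eq_0) (use Bs GM sQ in auto)
  have NS: "measure M N \<in> S" unfolding S_def using NG QN by auto
  have Nle: "measure M N \<le> s" unfolding s_def using NS Sbdd by (rule cSup_upper)
  have Nge: "s - 1 / real (Suc n) < measure M N" for n
  proof -
    have "measure M (Bs n) \<le> measure M N"
      unfolding N_def by (rule finite_measure_mono) (use NG GM N_def in auto)
    then show ?thesis using Bs(3)[of n] by simp
  qed
  have Neq: "measure M N = s"
  proof (rule ccontr)
    assume "measure M N \<noteq> s"
    then have "0 < s - measure M N" using Nle by simp
    then obtain n where "1 / real (Suc n) < s - measure M N"
      using reals_Archimedean by (metis inverse_eq_divide)
    then show False using Nge[of n] by simp
  qed
  show ?thesis
  proof (intro bexI[OF _ NG] conjI QN ballI impI)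
    fix B assume B: "B \<in> sets G" "emeasure Q B = 0"
    have QBN: "emeasure Q (N \<union> B) = 0"
      using emeasure_subadditive[of N Q B] QN B NG GM sQ by (simp add: emeasure_Un_null_set null_setsI)
    have "measure M (N \<union> B) \<in> S" unfolding S_def using QBN NG B by auto
    then have "measure M (N \<union> B) \<le> s" unfolding s_def using Sbdd by (rule cSup_upper)
    moreover have "measure M (N \<union> B) = measure M N + measure M (B - N)"
    proof -
      have "N \<union> B = N \<union> (B - N)" by auto
      then show ?thesis using finite_measure_Union[of N "B - N"] NG B GM by auto
    qed
    ultimately show "measure M (B - N) = 0" using Neq measure_nonneg[of M "B - N"] by linarith
  qed
qed


lemma single_Q:
  fixes M G :: "'a measure" and p :: real and \<MM> :: "'a measure set"
    and Z :: "'a \<Rightarrow> real" and RG :: "'a \<Rightarrow> ereal"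
  assumes M: "prob_space M"
    and p: "p \<ge> 1"
    and adm: "admissible_ambiguity M p \<MM>"
    and sub: "subalgebra M G"
    and Zp: "memLp M p Z"
    and cDR: "is_cond_DR M G \<MM> Z RG"
    and fin: "AE x in M. \<bar>RG x\<bar> \<noteq> \<infinity>"
    and RGp: "memLp M p (\<lambda>x. real_of_ereal (RG x))"
    and Q: "Q \<in> \<MM>"
  shows "integral\<^sup>L Q Z \<le> integral\<^sup>L Q (\<lambda>x. real_of_ereal (RG x))"
proof -
  interpret prob_space M by fact
  have PQ: "prob_space Q" "sets Q = sets M" "absolutely_continuous M Q"
    using adm Q unfolding admissible_ambiguity_def by auto
  interpret Q: prob_space Q by fact
  have spQ: "space Q = space M" using PQ(2) by (rule sets_eq_imp_space_eq)
  have GM: "\<And>B. B \<in> sets G \<Longrightarrow> B \<in> sets M" using sub unfolding subalgebra_def by auto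
  have spG: "space G = space M" using sub unfolding subalgebra_def by auto
  have subQ: "subalgebra Q G" using sub PQ(2) spQ unfolding subalgebra_def by auto
  have "sigma_finite_subalgebra Q G"
    unfolding sigma_finite_subalgebra_def
    using subQ finite_measure_restr_to_subalg[OF subQ Q.finite_measure_axioms]
    by (auto simp: finite_measure_def)
  interpret S: sigma_finite_subalgebra Q G by fact
  have ZQ: "integrable Q Z" by (rule integrable_Q[OF M p adm Q Zp])
  have RQ: "integrable Q (\<lambda>x. real_of_ereal (RG x))" by (rule integrable_Q[OF M p adm Q RGp])
  have ZmQ[measurable]: "Z \<in> borel_measurable Q" using ZQ by auto
  define Y0 where "Y0 = real_cond_exp Q G Z"
  have Y0G[measurable]: "Y0 \<in> borel_measurable G" unfolding Y0_def by simp
  have Y0Q[measurable]: "Y0 \<in> borel_measurable Q" unfolding Y0_def by simp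
  have Y0i: "integrable Q Y0" unfolding Y0_def using ZQ by (rule S.real_cond_exp_int(1))
  have Y0int: "integral\<^sup>L Q Y0 = integral\<^sup>L Q Z" unfolding Y0_def using ZQ by (rule S.real_cond_exp_int(2))
  have Y0set: "\<And>B. B \<in> sets G \<Longrightarrow> set_lebesgue_integral Q B Y0 = set_lebesgue_integral Q B Z"
    unfolding Y0_def using S.real_cond_exp_intA[OF ZQ] by simp
  obtain N where NG: "N \<in> sets G" and QN: "emeasure Q N = 0"
    and Nmax: "\<And>B. B \<in> sets G \<Longrightarrow> emeasure Q B = 0 \<Longrightarrow> measure M (B - N) = 0"
    using maximal_null[OF M sub PQ(2)] by blast
  have NM: "N \<in> sets M" using GM NG by auto
  have AEQN: "AE x in Q. x \<notin> N"
    using AE_iff_measurable[of N Q "\<lambda>x. x \<notin> N"] QN NM PQ(2) spQ sets.sets_into_space[OF NM] by auto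
  define h where "h = (\<lambda>x. if x \<in> N then (-\<infinity>::ereal) else ereal (Y0 x))"
  let ?V = "cond_exp_versions Q G Z"
  have hG: "h \<in> borel_measurable G" unfolding h_def
    by (intro measurable_If_set) (use NG in auto)
  have lower: "AE x in M. h x \<le> ereal (Y x)" if Y: "Y \<in> ?V" for Y
  proof -
    have YG[measurable]: "Y \<in> borel_measurable G" and Yi: "integrable Q Y"
      and Yset: "\<And>B. B \<in> sets G \<Longrightarrow> set_lebesgue_integral Q B Y = set_lebesgue_integral Q B Z"
      using Y unfolding cond_exp_versions_def by auto
    have "AE x in Q. real_cond_exp Q G Z x = Y x"
      by (rule S.real_cond_exp_charact) (use Yset ZQ Yi in auto)
    then have AEY: "AE x in Q. Y0 x = Y x" unfolding Y0_def .
    define B where "B = {x \<in> space G. Y x < Y0 x}"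
    have BG: "B \<in> sets G" unfolding B_def by measurable
    have BM: "B \<in> sets M" using BG GM by auto
    have "AE x in Q. x \<notin> B" using AEY by eventually_elim (auto simp: B_def)
    then have QB: "emeasure Q B = 0"
      using AE_iff_measurable[of B Q "\<lambda>x. x \<notin> B"] BM PQ(2) spQ sets.sets_into_space[OF BM] by auto
    have "measure M (B - N) = 0" using Nmax[OF BG QB] .
    then have "emeasure M (B - N) = 0" using BM NM by (simp add: emeasure_eq_measure)
    then have "AE x in M. x \<notin> B - N"
      using AE_iff_measurable[of "B - N" M "\<lambda>x. x \<notin> B - N"] BM NM sets.sets_into_space[OF BM] by auto
    then show ?thesis
    proof (rule AE_mp[OF _ AE_I2], intro impI)
      fix x assume x: "x \<in> space M" "x \<notin> B - N"
      show "h x \<le> ereal (Y x)"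
        using x spG by (cases "x \<in> N") (auto simp: h_def B_def not_less)
    qed
  qed
  have ess: "is_ess_inf M G ?V h"
    unfolding is_ess_inf_def
  proof (intro conjI hG ballI lower impI)
    fix h' assume h'G: "h' \<in> borel_measurable G" and h'low: "\<forall>Y\<in>?V. AE x in M. h' x \<le> ereal (Y x)"
    define Yn where "Yn = (\<lambda>(n::nat) x. Y0 x - real n * indicator N x)"
    have YnV: "Yn n \<in> ?V" for n
    proof -
      have m1: "Yn n \<in> borel_measurable G" unfolding Yn_def using NG by measurable
      have "integrable Q (\<lambda>x. real n * indicator N x)"
        using NM PQ(2) by (intro integrable_mult_right) (auto simp: Q.emeasure_eq_measure)
      then have i1: "integrable Q (Yn n)" unfolding Yn_def using Y0i by auto
      have "set_lebesgue_integral Q B (Yn n) = set_lebesgue_integral Q B Y0" if B: "B \<in> sets G" for B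
      proof (rule set_lebesgue_integral_cong_AE)
        show "B \<in> sets Q" using B GM PQ(2) by auto
        show "Yn n \<in> borel_measurable Q" using i1 by auto
        show "Y0 \<in> borel_measurable Q" by simp
        show "AE x\<in>B in Q. Yn n x = Y0 x" using AEQN by eventually_elim (auto simp: Yn_def)
      qed
      then show ?thesis using m1 i1 Y0set unfolding cond_exp_versions_def by auto
    qed
    have "\<forall>n. AE x in M. h' x \<le> ereal (Yn n x)" using h'low YnV by auto
    then have "AE x in M. \<forall>n. h' x \<le> ereal (Yn n x)" by (simp add: AE_all_countable)
    then show "AE x in M. h' x \<le> h x"
    proof eventually_elim
      case (elim x)
      show ?case
      proof (cases "x \<in> N")
        case False
        then show ?thesis using elim[rule_format, of 0] by (simp add: h_def Yn_def)
      next
        case True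
        have "h' x = -\<infinity>"
        proof (rule ccontr)
          assume ne: "h' x \<noteq> -\<infinity>"
          have le0: "h' x \<le> ereal (Y0 x)" using elim[rule_format, of 0] by (simp add: Yn_def)
          then obtain r where r: "h' x = ereal r" using ne by (cases "h' x") auto
          obtain n :: nat where n: "Y0 x - r < real n" using reals_Archimedean2 by blast
          have "h' x \<le> ereal (Y0 x - real n)" using elim[rule_format, of n] True by (simp add: Yn_def)
          then show False using r n by simp
        qed
        then show ?thesis by simp
      qed
    qed
  qed
  have "AE x in M. h x \<le> RG x" using cDR Q ess unfolding is_cond_DR_def by blast
  with fin have "AE x in M. h x \<le> RG x \<and> \<bar>RG x\<bar> \<noteq> \<infinity>" by eventually_elim auto
  then have "AE x in Q. h x \<le> RG x \<and> \<bar>RG x\<bar> \<noteq> \<infinity>"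
    using absolutely_continuous_AE[OF PQ(2) PQ(3)] by blast
  with AEQN have AEle: "AE x in Q. Y0 x \<le> real_of_ereal (RG x)"
  proof eventually_elim
    case (elim x)
    then show ?case by (cases "RG x") (auto simp: h_def)
  qed
  have "integral\<^sup>L Q Y0 \<le> integral\<^sup>L Q (\<lambda>x. real_of_ereal (RG x))"
    by (rule integral_mono_AE[OF Y0i RQ AEle])
  then show ?thesis using Y0int by simp
qed

theorem proposition3p6:
  fixes M G :: "'a measure" and p :: real and \<MM> :: "'a measure set"
    and Z :: "'a \<Rightarrow> real" and RG :: "'a \<Rightarrow> ereal"
  assumes "prob_space M"
    and "p \<ge> 1"
    and "admissible_ambiguity M p \<MM>"
    and "\<forall>W. memLp M p W \<longrightarrow> DR \<MM> W < \<infinity>"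
    and "subalgebra M G"
    and "memLp M p Z"
    and "is_cond_DR M G \<MM> Z RG"
    and "AE x in M. \<bar>RG x\<bar> \<noteq> \<infinity>"
    and "memLp M p (\<lambda>x. real_of_ereal (RG x))"
  shows "DR \<MM> Z \<le> DR \<MM> (\<lambda>x. real_of_ereal (RG x))"
  unfolding DR_def
proof (rule SUP_least)
  fix Q assume Q: "Q \<in> \<MM>"
  have "integral\<^sup>L Q Z \<le> integral\<^sup>L Q (\<lambda>x. real_of_ereal (RG x))"
    by (rule single_Q[OF assms(1,2,3,5,6,7,8,9) Q])
  also have "ereal (integral\<^sup>L Q (\<lambda>x. real_of_ereal (RG x))) \<le> (SUP Q\<in>\<MM>. ereal (integral\<^sup>L Q (\<lambda>x. real_of_ereal (RG x))))"
    using Q by (rule SUP_upper)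
  finally show "ereal (integral\<^sup>L Q Z) \<le> (SUP Q\<in>\<MM>. ereal (integral\<^sup>L Q (\<lambda>x. real_of_ereal (RG x))))"
    by simp
qed

end
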